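(* Let $N\ge1$, $n\ge0$, and let $Q(\alpha_1,\dots,\alpha_N)=\big(\prod_{j=1}^N\alpha_j\big)\sum_{0\le m\le 3n/4}D_m(\alpha)$, where each $D_m=\sum_{m_1+\dots+m_N=m}c^{(m)}_{m_1\dots m_N}\alpha_1^{2m_1}\cdots\alpha_N^{2m_N}$ has rational coefficients and $c^{(m)}_{m_1\dots m_N}\neq0$ only if $m_j\le n-m$ for every $j$. Suppose $Q$ takes integer values whenever all $\alpha_j$ are odd integers. Then $Q$ can be written uniquely as $$Q(\alpha)=\sum_{k_1,\dots,k_N\ge0}C_{k_1\dots k_N}\prod_{j=1}^NP_{k_j}\Big(\frac{\alpha_j-1}2\Big),\qquad C_{k_1\dots k_N}\in\mathbb Z,$$ and $C_{k_1\dots k_N}\neq0$ implies $\lfloor k_j/2\rfloor\le n-\sum_{i=1}^N\lfloor k_i/2\rfloor$ for every $j$.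
   Context: $P_m(\alpha)=\frac{\alpha(\alpha-1)\cdots(\alpha-m+1)}{m!}$ (with $P_0=1$); $\lfloor\cdot\rfloor$ is the integer part. *)

theory Defs
  imports Complex_Main
begin

text \<open>Variables alpha_1..alpha_N are indexed 0..N-1; exponent vectors (m_1..m_N) and
  index vectors (k_1..k_N) are lists of length N.\<close>

definition Dm :: "nat \<Rightarrow> (nat \<Rightarrow> nat list \<Rightarrow> rat) \<Rightarrow> nat \<Rightarrow> (nat \<Rightarrow> real) \<Rightarrow> real" where
  "Dm N c m \<alpha> = (\<Sum>ms \<in> {ms. length ms = N \<and> sum_list ms = m}.
       of_rat (c m ms) * (\<Prod>j<N. \<alpha> j ^ (2 * (ms ! j))))"

definition Qfun :: "nat \<Rightarrow> nat \<Rightarrow> (nat \<Rightarrow> nat list \<Rightarrow> rat) \<Rightarrow> (nat \<Rightarrow> real) \<Rightarrow> real" where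
  "Qfun N n c \<alpha> = (\<Prod>j<N. \<alpha> j) * (\<Sum>m \<in> {m. 4 * m \<le> 3 * n}. Dm N c m \<alpha>)"

text \<open>P_k(x) = x(x-1)...(x-k+1)/k! is the generalized binomial coefficient x gchoose k.\<close>
definition binom_rep :: "nat \<Rightarrow> (nat list \<Rightarrow> int) \<Rightarrow> (nat \<Rightarrow> real) \<Rightarrow> real" where
  "binom_rep N C \<alpha> = (\<Sum>ks \<in> {ks. C ks \<noteq> 0}.
       of_int (C ks) * (\<Prod>j<N. ((\<alpha> j - 1) / 2) gchoose (ks ! j)))"

definition admissible :: "nat \<Rightarrow> (nat list \<Rightarrow> int) \<Rightarrow> bool" where
  "admissible N C \<longleftrightarrow> finite {ks. C ks \<noteq> 0} \<and> (\<forall>ks. C ks \<noteq> 0 \<longrightarrow> length ks = N)"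

end

theory Submission
  imports Defs "HOL-Library.FuncSet"
begin


lemma expand1: "\<exists>b. (\<forall>k>e. b k = 0) \<and> (\<forall>y::real. (2*y+1)^e = (\<Sum>k\<le>e. b k * (y gchoose k)))"
proof (induction e)
  case 0
  show ?case by (rule exI[of _ "\<lambda>k. if k = 0 then 1 else 0"]) auto
next
  case (Suc e)
  then obtain b where b0: "\<forall>k>e. b k = 0" and bs: "\<forall>y::real. (2*y+1)^e = (\<Sum>k\<le>e. b k * (y gchoose k))" by blast
  define b' where "b' k = b k * (2 * real k + 1) + (case k of 0 \<Rightarrow> 0 | Suc i \<Rightarrow> 2 * real (Suc i) * b i)" for k
  show ?case
  proof (intro exI conjI allI impI)
    fix k assume "Suc e < k"
    then show "b' k = 0" using b0 by (cases k) (auto simp: b'_def)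
  next
    fix y :: real
    have "(2*y+1)^Suc e = (2*y+1) * (\<Sum>k\<le>e. b k * (y gchoose k))" using bs by simp
    also have "\<dots> = (\<Sum>k\<le>e. b k * (2 * (y * (y gchoose k)) + (y gchoose k)))"
      by (simp add: sum_distrib_left algebra_simps)
    also have "\<dots> = (\<Sum>k\<le>e. b k * (2 * real k + 1) * (y gchoose k)) + (\<Sum>k\<le>e. 2 * real (Suc k) * b k * (y gchoose Suc k))"
      by (simp add: gbinomial_mult_1 sum.distrib[symmetric] algebra_simps)
    also have "(\<Sum>k\<le>e. b k * (2 * real k + 1) * (y gchoose k)) = (\<Sum>k\<le>Suc e. b k * (2 * real k + 1) * (y gchoose k))"
      using b0 by simp
    also have "(\<Sum>k\<le>e. 2 * real (Suc k) * b k * (y gchoose Suc k)) = (\<Sum>k\<le>Suc e. (case k of 0 \<Rightarrow> 0 | Suc i \<Rightarrow> 2 * real (Suc i) * b i) * (y gchoose k))"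
      by (subst sum.atMost_Suc_shift) simp
    finally show "(2*y+1)^Suc e = (\<Sum>k\<le>Suc e. b' k * (y gchoose k))"
      by (simp add: b'_def sum.distrib[symmetric] algebra_simps)
  qed
qed

lemma sumlt:
  fixes a b :: "nat list"
  assumes "length a = length b" "\<forall>j<length a. a!j \<le> b!j" "a \<noteq> b"
  shows "sum_list a < sum_list b"
proof -
  obtain j where j: "j < length a" "a!j \<noteq> b!j" using assms nth_equalityI by blast
  have "(\<Sum>i=0..<length a. a!i) < (\<Sum>i=0..<length a. b!i)"
    by (rule sum_strict_mono_ex1) (use assms j in \<open>auto intro!: bexI[of _ j]\<close>)
  then show ?thesis using assms(1) by (simp add: sum_list_sum_nth)
qed

definition bas :: "nat \<Rightarrow> nat list \<Rightarrow> (nat \<Rightarrow> real) \<Rightarrow> real" where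
  "bas N ks y = (\<Prod>j<N. y j gchoose (ks!j))"

lemma tri:
  assumes K: "finite K" "\<forall>ks\<in>K. length ks = N"
    and F: "\<And>x. length x = N \<Longrightarrow> (\<Sum>ks\<in>K. D ks * bas N ks (\<lambda>j. real (x!j))) \<in> \<int>"
  shows "ks \<in> K \<Longrightarrow> D ks \<in> \<int>"
proof (induction "sum_list ks" arbitrary: ks rule: less_induct)
  case less
  have len: "length ks = N" using less K by auto
  have P: "bas N k (\<lambda>j. real (ks!j)) = of_nat (\<Prod>j<N. ks!j choose k!j)" for k
    by (simp add: bas_def binomial_gbinomial)
  have self: "bas N ks (\<lambda>j. real (ks!j)) = 1" unfolding P by simp
  have rest: "D k * bas N k (\<lambda>j. real (ks!j)) \<in> \<int>" if k: "k \<in> K - {ks}" for k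
  proof (cases "\<forall>j<N. k!j \<le> ks!j")
    case True
    have "sum_list k < sum_list ks" using sumlt[of k ks] True k K len by auto
    then have "D k \<in> \<int>" using less k by auto
    then show ?thesis unfolding P by (intro Ints_mult Ints_of_nat)
  next
    case False
    then obtain j where "j < N" "ks!j < k!j" by auto
    then have z: "(\<Prod>j<N. ks!j choose k!j) = 0" by (auto simp: prod_zero_iff)
    show ?thesis unfolding P z by simp
  qed
  have "(\<Sum>k\<in>K. D k * bas N k (\<lambda>j. real (ks!j))) = D ks + (\<Sum>k\<in>K-{ks}. D k * bas N k (\<lambda>j. real (ks!j)))"
    using less K by (simp add: sum.remove self)
  moreover have "(\<Sum>k\<in>K-{ks}. D k * bas N k (\<lambda>j. real (ks!j))) \<in> \<int>"
    using rest by (intro Ints_sum) auto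
  moreover have "(\<Sum>k\<in>K. D k * bas N k (\<lambda>j. real (ks!j))) \<in> \<int>" using F len by blast
  ultimately show ?case by (metis Ints_diff add_diff_cancel_right')
qed

lemma half_not_Int: "(1/2::real) \<notin> \<int>"
proof
  assume "(1/2::real) \<in> \<int>"
  then obtain i where "real_of_int i = 1/2" by (auto elim: Ints_cases)
  then have "2 * real_of_int i = 1" by simp
  then have "2 * i = 1" by linarith
  then show False by presburger
qed

lemma tri0:
  assumes K: "finite K" "\<forall>ks\<in>K. length ks = N"
    and F: "\<And>x. length x = N \<Longrightarrow> (\<Sum>ks\<in>K. D ks * bas N ks (\<lambda>j. real (x!j))) = 0"
  shows "ks \<in> K \<Longrightarrow> D ks = 0"
proof (rule ccontr)
  assume ks: "ks \<in> K" and d: "D ks \<noteq> 0"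
  have "D ks / (2 * D ks) \<in> \<int>"
  proof (rule tri[where D="\<lambda>k. D k / (2 * D ks)", OF K _ ks])
    fix x :: "nat list" assume "length x = N"
    then have "(\<Sum>k\<in>K. D k / (2 * D ks) * bas N k (\<lambda>j. real (x!j))) = (\<Sum>k\<in>K. D k * bas N k (\<lambda>j. real (x!j))) / (2 * D ks)"
      by (simp add: sum_divide_distrib)
    also have "\<dots> = 0" using F \<open>length x = N\<close> by simp
    finally show "(\<Sum>k\<in>K. D k / (2 * D ks) * bas N k (\<lambda>j. real (x!j))) \<in> \<int>" by simp
  qed
  then show False using d half_not_Int by simp
qed



definition bb :: "nat \<Rightarrow> nat \<Rightarrow> real" where
  "bb e = (SOME b. (\<forall>k>e. b k = 0) \<and> (\<forall>y::real. (2*y+1)^e = (\<Sum>k\<le>e. b k * (y gchoose k))))"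

lemma bb: "(\<forall>k>e. bb e k = 0) \<and> (\<forall>y::real. (2*y+1)^e = (\<Sum>k\<le>e. bb e k * (y gchoose k)))"
  unfolding bb_def by (rule someI_ex[OF expand1])

lemma bbL: "e \<le> L \<Longrightarrow> (2*y+1)^e = (\<Sum>k\<le>L. bb e k * (y gchoose k))"
proof -
  assume "e \<le> L"
  have "(2*y+1)^e = (\<Sum>k\<le>e. bb e k * (y gchoose k))" using bb by blast
  also have "\<dots> = (\<Sum>k\<le>L. bb e k * (y gchoose k))"
    by (rule sum.mono_neutral_left) (use bb \<open>e \<le> L\<close> in auto)
  finally show ?thesis .
qed

definition Lst :: "nat \<Rightarrow> nat \<Rightarrow> nat list set" where
  "Lst N L = {xs. set xs \<subseteq> {..L} \<and> length xs = N}"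

lemma finite_Lst: "finite (Lst N L)"
  unfolding Lst_def by (rule finite_lists_length_eq) auto

lemma prodexp:
  assumes "\<forall>j<N. e j \<le> L"
  shows "(\<Prod>j<N. (2 * y j + 1)^(e j)) = (\<Sum>ks\<in>Lst N L. (\<Prod>j<N. bb (e j) (ks!j)) * bas N ks y)"
proof -
  have "(\<Prod>j<N. (2 * y j + 1)^(e j)) = (\<Prod>j<N. \<Sum>k\<le>L. bb (e j) k * (y j gchoose k))"
    using assms by (intro prod.cong refl bbL) auto
  also have "\<dots> = (\<Sum>g\<in>PiE {..<N} (\<lambda>_. {..L}). \<Prod>j<N. bb (e j) (g j) * (y j gchoose g j))"
    by (rule prod_sum_PiE) auto
  also have "\<dots> = (\<Sum>ks\<in>Lst N L. \<Prod>j<N. bb (e j) (ks!j) * (y j gchoose (ks!j)))"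
  proof (rule sum.reindex_bij_witness[where j="\<lambda>g. map g [0..<N]" and i="\<lambda>ks. restrict (\<lambda>j. ks!j) {..<N}"])
    fix a assume "a \<in> PiE {..<N} (\<lambda>_. {..L})"
    then show "restrict (\<lambda>j. map a [0..<N] ! j) {..<N} = a"
      by (auto simp: PiE_def extensional_def restrict_def fun_eq_iff)
    show "map a [0..<N] \<in> Lst N L" using \<open>a \<in> _\<close> by (auto simp: Lst_def PiE_iff)
    show "(\<Prod>j<N. bb (e j) (map a [0..<N] ! j) * (y j gchoose (map a [0..<N] ! j))) =
          (\<Prod>j<N. bb (e j) (a j) * (y j gchoose a j))"
      by (intro prod.cong) auto
  next
    fix b assume b: "b \<in> Lst N L"
    then show "map (restrict (\<lambda>j. b!j) {..<N}) [0..<N] = b"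
      by (auto simp: Lst_def intro: nth_equalityI)
    show "restrict (\<lambda>j. b!j) {..<N} \<in> PiE {..<N} (\<lambda>_. {..L})"
      using b by (auto simp: Lst_def PiE_iff) (meson atMost_iff nth_mem subsetD)
  qed
  finally show ?thesis by (simp add: bas_def prod.distrib)
qed



definition Creal :: "nat \<Rightarrow> nat \<Rightarrow> (nat \<Rightarrow> nat list \<Rightarrow> rat) \<Rightarrow> nat list \<Rightarrow> real" where
  "Creal N n c ks = (\<Sum>m\<in>{m. 4 * m \<le> 3 * n}. \<Sum>ms\<in>{ms. length ms = N \<and> sum_list ms = m}.
      of_rat (c m ms) * (\<Prod>j<N. bb (2*(ms!j)+1) (ks!j)))"

lemma expansion:
  assumes hyp: "\<And>m ms. 4 * m \<le> 3 * n \<Longrightarrow> length ms = N \<Longrightarrow> sum_list ms = m \<Longrightarrow> c m ms \<noteq> 0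
            \<Longrightarrow> \<forall>j<N. ms ! j \<le> n - m"
  shows "Qfun N n c \<alpha> = (\<Sum>ks\<in>Lst N (2*n+1). Creal N n c ks * bas N ks (\<lambda>j. (\<alpha> j - 1)/2))"
proof -
  define y where "y = (\<lambda>j. (\<alpha> j - 1)/2)"
  have ay: "\<alpha> j = 2 * y j + 1" for j by (simp add: y_def field_simps)
  define M where "M = {m. 4 * m \<le> 3 * n}"
  define Ms where "Ms m = {ms. length ms = N \<and> sum_list ms = m}" for m :: nat
  define K where "K = Lst N (2*n+1)"
  have step1: "Qfun N n c \<alpha> = (\<Sum>m\<in>M. \<Sum>ms\<in>Ms m. of_rat (c m ms) * (\<Prod>j<N. \<alpha> j ^ (2*(ms!j)+1)))"
  proof -
    have pe: "(\<Prod>j<N. \<alpha> j ^ (2*(ms!j)+1)) = (\<Prod>j<N. \<alpha> j) * (\<Prod>j<N. \<alpha> j ^ (2*(ms!j)))" for ms :: "nat list"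
      by (subst prod.distrib[symmetric]) (simp add: mult.commute)
    show ?thesis
      unfolding Qfun_def Dm_def M_def Ms_def sum_distrib_left pe by (simp only: mult.left_commute)
  qed
  have step2: "of_rat (c m ms) * (\<Prod>j<N. \<alpha> j ^ (2*(ms!j)+1)) =
     (\<Sum>ks\<in>K. of_rat (c m ms) * (\<Prod>j<N. bb (2*(ms!j)+1) (ks!j)) * bas N ks y)"
    if m: "m \<in> M" and ms: "ms \<in> Ms m" for m ms
  proof (cases "c m ms = 0")
    case True then show ?thesis by simp
  next
    case False
    have "\<forall>j<N. ms ! j \<le> n - m" using hyp[of m ms] m ms False by (auto simp: M_def Ms_def)
    then have le: "\<forall>j<N. 2*(ms!j)+1 \<le> 2*n+1" by (simp add: le_diff_conv2) (meson diff_le_self le_trans)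
    have "(\<Prod>j<N. \<alpha> j ^ (2*(ms!j)+1)) = (\<Prod>j<N. (2 * y j + 1) ^ (2*(ms!j)+1))" by (simp add: ay)
    also have "\<dots> = (\<Sum>ks\<in>K. (\<Prod>j<N. bb (2*(ms!j)+1) (ks!j)) * bas N ks y)"
      unfolding K_def by (rule prodexp[OF le])
    finally show ?thesis by (simp add: sum_distrib_left mult.assoc)
  qed
  have "Qfun N n c \<alpha> = (\<Sum>m\<in>M. \<Sum>ms\<in>Ms m. \<Sum>ks\<in>K. of_rat (c m ms) * (\<Prod>j<N. bb (2*(ms!j)+1) (ks!j)) * bas N ks y)"
    unfolding step1 by (rule sum.cong[OF refl], rule sum.cong[OF refl], rule step2) auto
  also have "\<dots> = (\<Sum>m\<in>M. \<Sum>ks\<in>K. \<Sum>ms\<in>Ms m. of_rat (c m ms) * (\<Prod>j<N. bb (2*(ms!j)+1) (ks!j)) * bas N ks y)"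
    by (rule sum.cong[OF refl], rule sum.swap)
  also have "\<dots> = (\<Sum>ks\<in>K. \<Sum>m\<in>M. \<Sum>ms\<in>Ms m. of_rat (c m ms) * (\<Prod>j<N. bb (2*(ms!j)+1) (ks!j)) * bas N ks y)"
    by (rule sum.swap)
  also have "\<dots> = (\<Sum>ks\<in>K. Creal N n c ks * bas N ks y)"
    unfolding Creal_def M_def Ms_def by (simp add: sum_distrib_right)
  finally show ?thesis unfolding K_def y_def .
qed


lemma bb0: "e < k \<Longrightarrow> bb e k = 0" using conjunct1[OF bb[of e]] by blast

lemma degree:
  assumes hyp: "\<And>m ms. 4 * m \<le> 3 * n \<Longrightarrow> length ms = N \<Longrightarrow> sum_list ms = m \<Longrightarrow> c m ms \<noteq> 0
            \<Longrightarrow> \<forall>j<N. ms ! j \<le> n - m"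
    and nz: "Creal N n c ks \<noteq> 0" and j: "j < N"
  shows "int ((ks ! j) div 2) \<le> int n - (\<Sum>i<N. int ((ks ! i) div 2))"
proof -
  obtain m where m: "4 * m \<le> 3 * n" and
    nz2: "(\<Sum>ms\<in>{ms. length ms = N \<and> sum_list ms = m}. of_rat (c m ms) * (\<Prod>j<N. bb (2*(ms!j)+1) (ks!j))) \<noteq> 0"
    using sum.not_neutral_contains_not_neutral[OF nz[unfolded Creal_def]] by auto
  from sum.not_neutral_contains_not_neutral[OF nz2] obtain ms where ms0: "ms \<in> {ms. length ms = N \<and> sum_list ms = m}"
    and t: "of_rat (c m ms) * (\<Prod>j<N. bb (2*(ms!j)+1) (ks!j)) \<noteq> 0"
    by blast
  have ms: "length ms = N" "sum_list ms = m" using ms0 by auto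
  have c: "c m ms \<noteq> 0" using t by auto
  have kb: "ks!i \<le> 2*(ms!i)+1" if "i < N" for i
  proof (rule ccontr)
    assume "\<not> ks!i \<le> 2*(ms!i)+1"
    then have "bb (2*(ms!i)+1) (ks!i) = 0" using bb0 by auto
    then have "(\<Prod>j<N. bb (2*(ms!j)+1) (ks!j)) = 0" using that by (auto simp: prod_zero_iff)
    then show False using t by simp
  qed
  have kd: "ks!i div 2 \<le> ms!i" if "i < N" for i using kb[OF that] by linarith
  have msn: "\<forall>j<N. ms ! j \<le> n - m" using hyp[OF m ms c] .
  have "(\<Sum>i<N. ks!i div 2) \<le> (\<Sum>i<N. ms!i)" by (intro sum_mono kd) auto
  also have "(\<Sum>i<N. ms!i) = m" using ms by (simp add: sum_list_sum_nth atLeast0LessThan)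
  finally have s: "(\<Sum>i<N. ks!i div 2) \<le> m" .
  have "m \<le> n" using m by linarith
  have "ms!j \<le> n - m" using msn j by blast
  then have "ks!j div 2 + (\<Sum>i<N. ks!i div 2) \<le> n" using kd[OF j] s \<open>m \<le> n\<close> by linarith
  then have "int (ks!j div 2) + int (\<Sum>i<N. ks!i div 2) \<le> int n" by linarith
  then show ?thesis by (simp add: of_nat_sum)
qed



lemma binom_rep_K:
  assumes "finite K" "{ks. C ks \<noteq> 0} \<subseteq> K"
  shows "binom_rep N C \<alpha> = (\<Sum>ks\<in>K. of_int (C ks) * bas N ks (\<lambda>j. (\<alpha> j - 1)/2))"
  unfolding binom_rep_def bas_def by (rule sum.mono_neutral_left) (use assms in auto)

lemma unique:
  assumes a1: "admissible N C1" and a2: "admissible N C2"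
    and eq: "\<forall>\<alpha>. binom_rep N C1 \<alpha> = binom_rep N C2 \<alpha>"
  shows "C1 = C2"
proof (rule ext)
  define K where "K = {ks. C1 ks \<noteq> 0} \<union> {ks. C2 ks \<noteq> 0}"
  have fK: "finite K" using a1 a2 by (auto simp: K_def admissible_def)
  have lK: "\<forall>ks\<in>K. length ks = N" using a1 a2 by (auto simp: K_def admissible_def)
  have z: "real_of_int (C1 ks) - real_of_int (C2 ks) = 0" if "ks \<in> K" for ks
  proof (rule tri0[OF fK lK _ that, where D="\<lambda>ks. real_of_int (C1 ks) - real_of_int (C2 ks)"])
    fix x :: "nat list" assume "length x = N"
    define \<alpha> where "\<alpha> = (\<lambda>j. 2 * real (x!j) + 1)"
    have y: "(\<lambda>j. (\<alpha> j - 1)/2) = (\<lambda>j. real (x!j))" by (simp add: \<alpha>_def)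
    have "binom_rep N C1 \<alpha> - binom_rep N C2 \<alpha> = 0" using eq by simp
    then have "(\<Sum>ks\<in>K. of_int (C1 ks) * bas N ks (\<lambda>j. real (x!j))) - (\<Sum>ks\<in>K. of_int (C2 ks) * bas N ks (\<lambda>j. real (x!j))) = 0"
      using binom_rep_K[OF fK, of C1 N \<alpha>] binom_rep_K[OF fK, of C2 N \<alpha>] y by (simp add: K_def)
    then show "(\<Sum>ks\<in>K. (real_of_int (C1 ks) - real_of_int (C2 ks)) * bas N ks (\<lambda>j. real (x!j))) = 0"
      by (simp add: sum_subtractf left_diff_distrib)
  qed
  fix ks show "C1 ks = C2 ks"
  proof (cases "ks \<in> K")
    case True then show ?thesis using z by simp
  next
    case False then show ?thesis by (simp add: K_def)
  qed
qed

theorem mainTheorem2: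
  fixes N n :: nat and c :: "nat \<Rightarrow> nat list \<Rightarrow> rat"
  assumes "N \<ge> 1"
    and "\<And>m ms. 4 * m \<le> 3 * n \<Longrightarrow> length ms = N \<Longrightarrow> sum_list ms = m \<Longrightarrow> c m ms \<noteq> 0
            \<Longrightarrow> \<forall>j<N. ms ! j \<le> n - m"
    and "\<And>a :: nat \<Rightarrow> int. (\<forall>j<N. odd (a j)) \<Longrightarrow> Qfun N n c (\<lambda>j. of_int (a j)) \<in> \<int>"
  shows "(\<exists>!C. admissible N C \<and> (\<forall>\<alpha>. Qfun N n c \<alpha> = binom_rep N C \<alpha>))
    \<and> (\<forall>C. admissible N C \<and> (\<forall>\<alpha>. Qfun N n c \<alpha> = binom_rep N C \<alpha>) \<longrightarrow>
          (\<forall>ks. C ks \<noteq> 0 \<longrightarrow>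
             (\<forall>j<N. int ((ks ! j) div 2) \<le> int n - (\<Sum>i<N. int ((ks ! i) div 2)))))"
proof -
  note hyp = assms(2)
  define K where "K = Lst N (2*n+1)"
  have fK: "finite K" by (simp add: K_def finite_Lst)
  have lK: "\<forall>ks\<in>K. length ks = N" by (simp add: K_def Lst_def)
  have E: "Qfun N n c \<alpha> = (\<Sum>ks\<in>K. Creal N n c ks * bas N ks (\<lambda>j. (\<alpha> j - 1)/2))" for \<alpha>
    unfolding K_def by (rule expansion[OF hyp])
  have Int: "Creal N n c ks \<in> \<int>" if "ks \<in> K" for ks
  proof (rule tri[OF fK lK _ that])
    fix x :: "nat list" assume "length x = N"
    define a where "a = (\<lambda>j. 2 * int (x!j) + 1)"
    have "Qfun N n c (\<lambda>j. of_int (a j)) \<in> \<int>" using assms(3)[of a] by (simp add: a_def)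
    moreover have "(\<lambda>j. (real_of_int (a j) - 1)/2) = (\<lambda>j. real (x!j))" by (simp add: a_def)
    ultimately show "(\<Sum>ks\<in>K. Creal N n c ks * bas N ks (\<lambda>j. real (x!j))) \<in> \<int>"
      using E[of "\<lambda>j. of_int (a j)"] by simp
  qed
  define C where "C ks = (if ks \<in> K then \<lfloor>Creal N n c ks\<rfloor> else 0)" for ks
  have Cr: "real_of_int (C ks) = (if ks \<in> K then Creal N n c ks else 0)" for ks
    using Int by (simp add: C_def)
  have sub: "{ks. C ks \<noteq> 0} \<subseteq> K" by (auto simp: C_def split: if_splits)
  have adm: "admissible N C" unfolding admissible_def using sub fK lK finite_subset by blast
  have rep: "\<forall>\<alpha>. Qfun N n c \<alpha> = binom_rep N C \<alpha>"
  proof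
    fix \<alpha>
    show "Qfun N n c \<alpha> = binom_rep N C \<alpha>"
      unfolding E binom_rep_K[OF fK sub] by (intro sum.cong refl) (simp add: Cr)
  qed
  have U: "C' = C" if "admissible N C'" "\<forall>\<alpha>. Qfun N n c \<alpha> = binom_rep N C' \<alpha>" for C'
    using unique[OF that(1) adm] that(2) rep by simp
  show ?thesis
  proof (rule conjI)
    show "\<exists>!C. admissible N C \<and> (\<forall>\<alpha>. Qfun N n c \<alpha> = binom_rep N C \<alpha>)"
    proof (rule ex1I[of _ C])
      show "admissible N C \<and> (\<forall>\<alpha>. Qfun N n c \<alpha> = binom_rep N C \<alpha>)" using adm rep by blast
    next
      fix C' assume "admissible N C' \<and> (\<forall>\<alpha>. Qfun N n c \<alpha> = binom_rep N C' \<alpha>)"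
      then show "C' = C" using U by blast
    qed
  next
    show "\<forall>C'. admissible N C' \<and> (\<forall>\<alpha>. Qfun N n c \<alpha> = binom_rep N C' \<alpha>) \<longrightarrow>
          (\<forall>ks. C' ks \<noteq> 0 \<longrightarrow>
             (\<forall>j<N. int ((ks ! j) div 2) \<le> int n - (\<Sum>i<N. int ((ks ! i) div 2))))"
    proof (intro allI impI)
      fix C' ks j
      assume h: "admissible N C' \<and> (\<forall>\<alpha>. Qfun N n c \<alpha> = binom_rep N C' \<alpha>)" and nz: "C' ks \<noteq> 0" and j: "j < N"
      have "C ks \<noteq> 0" using U h nz by blast
      then have cz: "Creal N n c ks \<noteq> 0" using Cr[of ks] by (cases "ks \<in> K") auto
      show "int ((ks ! j) div 2) \<le> int n - (\<Sum>i<N. int ((ks ! i) div 2))"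
        using degree[OF hyp cz j] .
    qed
  qed
qed


end
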